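(* Let $P=\{\mathbf{x}: A\mathbf{x}\le\mathbf{b}\}\subseteq[0,k]^n\subseteq\mathbb{R}^n$ be a $d$-dimensional lattice polytope with integral constraint matrix $A$. Then the monotone diameter of $P$ is at most $(d-1)\|A\|_{\infty}nk+1$.
   Context: A lattice polytope is a polytope whose vertices have integer coordinates. $\|A\|_\infty$ denotes the maximum absolute value of an entry of $A$. A $\mathbf{c}$-monotone path is a sequence of vertices of $P$ in which consecutive vertices are joined by an edge of $P$ and $\mathbf{c}^{\intercal}\mathbf{x}$ strictly increases; its length is its number of edges. The monotone diameter of $P$ is the maximum, over all generic linear objectives $\mathbf{c}$ (not constant on any edge) and all vertices $\mathbf{v}$, of the length of a shortest $\mathbf{c}$-monotone path from $\mathbf{v}$ to the $\mathbf{c}$-maximal vertex. *)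

theory Defs
  imports "HOL-Analysis.Analysis"
begin

definition vertex_of :: "real^'n \<Rightarrow> (real^'n) set \<Rightarrow> bool" where
  "vertex_of v P \<longleftrightarrow> v extreme_point_of P"

definition poly_edge :: "(real^'n) set \<Rightarrow> real^'n \<Rightarrow> real^'n \<Rightarrow> bool" where
  "poly_edge P u v \<longleftrightarrow> (convex hull {u, v}) face_of P \<and> aff_dim (convex hull {u, v}) = 1"

definition generic_obj :: "(real^'n) set \<Rightarrow> real^'n \<Rightarrow> bool" where
  "generic_obj P c \<longleftrightarrow> (\<forall>u v. poly_edge P u v \<longrightarrow> c \<bullet> u \<noteq> c \<bullet> v)"

text \<open>A c-monotone path (as the list of its vertices); its length is length xs - 1.\<close>
definition mono_path :: "(real^'n) set \<Rightarrow> real^'n \<Rightarrow> (real^'n) list \<Rightarrow> bool" where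
  "mono_path P c xs \<longleftrightarrow> xs \<noteq> [] \<and> (\<forall>x\<in>set xs. vertex_of x P) \<and>
     (\<forall>i. Suc i < length xs \<longrightarrow> poly_edge P (xs ! i) (xs ! Suc i) \<and> c \<bullet> (xs ! i) < c \<bullet> (xs ! Suc i))"

definition shortest_mono_len :: "(real^'n) set \<Rightarrow> real^'n \<Rightarrow> real^'n \<Rightarrow> nat" where
  "shortest_mono_len P c v = (LEAST l. \<exists>xs. mono_path P c xs \<and> hd xs = v \<and>
       vertex_of (last xs) P \<and> (\<forall>x\<in>P. c \<bullet> x \<le> c \<bullet> last xs) \<and> length xs - 1 = l)"

definition monotone_diameter :: "(real^'n) set \<Rightarrow> nat" where
  "monotone_diameter P = Sup {shortest_mono_len P c v | c v. generic_obj P c \<and> vertex_of v P}"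

definition max_entry_norm :: "real^'n^'m \<Rightarrow> real" where
  "max_entry_norm A = Max {\<bar>A $ i $ j\<bar> | i j. True}"

end

theory Submission
  imports Defs
begin

lemma mono_path_single[simp]: "mono_path P c [x] \<longleftrightarrow> vertex_of x P"
  unfolding mono_path_def by auto

lemma mono_path_cons2[simp]:
  "mono_path P c (x # y # xs) \<longleftrightarrow> vertex_of x P \<and> poly_edge P x y \<and> c \<bullet> x < c \<bullet> y \<and> mono_path P c (y # xs)"
  unfolding mono_path_def
  apply (auto simp: less_Suc_eq_0_disj)
  done

lemma mono_path_append:
  "mono_path P c xs1 \<Longrightarrow> mono_path P c xs2 \<Longrightarrow> last xs1 = hd xs2 \<Longrightarrow>
   mono_path P c (xs1 @ tl xs2) \<and> hd (xs1 @ tl xs2) = hd xs1 \<and> last (xs1 @ tl xs2) = last xs2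
   \<and> length (xs1 @ tl xs2) = length xs1 + length xs2 - 1"
proof (induction xs1 rule: induct_list012)
  case 1
  then show ?case by (simp add: mono_path_def)
next
  case (2 x)
  then show ?case
    by (cases xs2) (auto simp: mono_path_def)
next
  case (3 x y zs)
  then show ?case by auto
qed

lemma max_at_extreme:
  fixes G :: "(real^'n) set"
  assumes "compact G" "convex G" "\<And>z. z extreme_point_of G \<Longrightarrow> f \<bullet> z \<le> t" "y \<in> G"
  shows "f \<bullet> y \<le> t"
proof -
  have "convex hull {x. x extreme_point_of G} \<subseteq> {z. f \<bullet> z \<le> t}"
    by (rule hull_minimal) (auto simp: assms convex_halfspace_le)
  then show ?thesis using Krein_Milman_Minkowski[OF assms(1,2)] assms(4) by auto
qed

lemma extreme_max_exists:
  fixes G :: "(real^'n) set"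
  assumes "compact G" "convex G" "G \<noteq> {}"
  obtains x where "x extreme_point_of G" "\<And>z. z \<in> G \<Longrightarrow> f \<bullet> z \<le> f \<bullet> x"
proof -
  obtain m where m: "m \<in> G" "\<And>z. z \<in> G \<Longrightarrow> f \<bullet> z \<le> f \<bullet> m"
  proof -
    have "continuous_on G (\<lambda>z. f \<bullet> z)" by (intro continuous_intros)
    then show ?thesis using continuous_attains_sup[of G "\<lambda>z. f \<bullet> z"] assms that by blast
  qed
  define F where "F = G \<inter> {z. f \<bullet> z = f \<bullet> m}"
  have F: "F face_of G" unfolding F_def
    by (rule face_of_Int_supporting_hyperplane_le) (use assms m in auto)
  have "compact F" using face_of_imp_compact[OF assms(2,1) F] .
  moreover have "convex F" using F face_of_imp_convex by blast
  moreover have "F \<noteq> {}" using m unfolding F_def by auto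
  ultimately obtain x where x: "x extreme_point_of F"
    using extreme_point_exists_convex by blast
  then have "x extreme_point_of G" "x \<in> F" using extreme_point_of_face[OF F] by auto
  then show ?thesis using that m unfolding F_def by auto
qed

lemma small_step:
  fixes a :: "'i \<Rightarrow> real^'n"
  assumes "finite I" "\<forall>h\<in>I. a h \<bullet> x \<le> \<beta> h"
    "\<forall>h\<in>I. a h \<bullet> x = \<beta> h \<longrightarrow> a h \<bullet> d \<le> 0"
  obtains \<epsilon> where "\<epsilon> > 0" "\<epsilon> \<le> 1" "\<forall>h\<in>I. a h \<bullet> (x + \<epsilon> *\<^sub>R d) \<le> \<beta> h"
proof -
  define S where "S = insert 1 ((\<lambda>h. (\<beta> h - a h \<bullet> x) / (\<bar>a h \<bullet> d\<bar> + 1)) ` {h\<in>I. a h \<bullet> x \<noteq> \<beta> h})"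
  define \<epsilon> where "\<epsilon> = Min S"
  have fin: "finite S" using assms(1) unfolding S_def by auto
  have pos: "\<forall>s\<in>S. s > 0"
    unfolding S_def using assms(2) by (force intro!: divide_pos_pos)
  have "\<epsilon> > 0" unfolding \<epsilon>_def using fin pos by (auto simp: S_def)
  moreover have "\<epsilon> \<le> 1" unfolding \<epsilon>_def using fin by (auto simp: S_def)
  moreover have "a h \<bullet> (x + \<epsilon> *\<^sub>R d) \<le> \<beta> h" if h: "h \<in> I" for h
  proof (cases "a h \<bullet> x = \<beta> h")
    case True
    then show ?thesis using assms(3) h \<open>\<epsilon> > 0\<close>
      by (simp add: inner_add_right mult_nonneg_nonpos)
  next
    case False
    have sl: "\<beta> h - a h \<bullet> x > 0" using assms(2) h False by auto
    have "\<epsilon> \<le> (\<beta> h - a h \<bullet> x) / (\<bar>a h \<bullet> d\<bar> + 1)"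
      unfolding \<epsilon>_def using fin h False by (auto simp: S_def)
    then have "\<epsilon> * (\<bar>a h \<bullet> d\<bar> + 1) \<le> \<beta> h - a h \<bullet> x"
      by (simp add: pos_le_divide_eq add_pos_nonneg)
    moreover have "\<epsilon> * (a h \<bullet> d) \<le> \<epsilon> * (\<bar>a h \<bullet> d\<bar> + 1)"
      using \<open>\<epsilon> > 0\<close> by (intro mult_left_mono) auto
    ultimately show ?thesis by (simp add: inner_add_right)
  qed
  ultimately show ?thesis using that by blast
qed

lemma seg_lemma:
  fixes G :: "(real^'n) set"
  assumes conv: "convex G" and x: "x extreme_point_of G" and p: "p \<in> G" "\<phi> \<bullet> x < \<phi> \<bullet> p"
    and line: "G \<subseteq> affine hull {x,p}" and y: "y \<in> G" "\<forall>z\<in>G. \<phi> \<bullet> z \<le> \<phi> \<bullet> y"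
  shows "G = closed_segment x y"
proof
  have xG: "x \<in> G" using x extreme_point_of_def by blast
  show "closed_segment x y \<subseteq> G" using closed_segment_subset[OF xG y(1) conv] .
  have par: "\<exists>v. z = x + v *\<^sub>R (p - x)" if "z \<in> G" for z
  proof -
    from that line obtain u v where "z = u *\<^sub>R x + v *\<^sub>R p" "u + v = 1"
      unfolding affine_hull_2 by blast
    then have "u = 1 - v" by simp
    with \<open>z = u *\<^sub>R x + v *\<^sub>R p\<close> have "z = x + v *\<^sub>R (p - x)" by (simp add: algebra_simps)
    then show ?thesis by blast
  qed
  define \<delta> where "\<delta> = \<phi> \<bullet> (p - x)"
  have dpos: "\<delta> > 0" using p(2) by (simp add: \<delta>_def inner_diff_right)
  obtain w where w: "y = x + w *\<^sub>R (p - x)" using par y(1) by blast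
  have "\<phi> \<bullet> p \<le> \<phi> \<bullet> y" using y p by auto
  then have "1 * \<delta> \<le> w * \<delta>" using w by (simp add: \<delta>_def inner_add_right inner_diff_right algebra_simps)
  then have w1: "w \<ge> 1" using dpos by (simp add: mult_le_cancel_right)
  show "G \<subseteq> closed_segment x y"
  proof
    fix z assume z: "z \<in> G"
    obtain v where v: "z = x + v *\<^sub>R (p - x)" using par z by blast
    have "\<phi> \<bullet> z \<le> \<phi> \<bullet> y" using y z by auto
    then have "v * \<delta> \<le> w * \<delta>" using v w by (simp add: \<delta>_def inner_add_right inner_diff_right algebra_simps)
    then have vw: "v \<le> w" using dpos by (simp add: mult_le_cancel_right)
    have v0: "v \<ge> 0"
    proof (rule ccontr)
      assume "\<not> v \<ge> 0"
      then have vn: "v < 0" by simp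
      define \<theta> where "\<theta> = - v / (1 - v)"
      have t0: "\<theta> > 0" "\<theta> < 1" using vn by (auto simp: \<theta>_def field_simps)
      have e1: "(1 - v) *\<^sub>R x = z - v *\<^sub>R p" using v by (simp add: algebra_simps)
      have "1 - \<theta> = 1 / (1 - v)" using vn by (simp add: \<theta>_def field_simps)
      then have "(1 - \<theta>) *\<^sub>R z + \<theta> *\<^sub>R p = (1 / (1 - v)) *\<^sub>R (z - v *\<^sub>R p)"
        using vn by (simp add: \<theta>_def algebra_simps divide_inverse scaleR_diff_right)
      also have "\<dots> = (1 / (1 - v)) *\<^sub>R ((1 - v) *\<^sub>R x)" using e1 by simp
      also have "\<dots> = x" using vn by simp
      finally have xe: "x = (1 - \<theta>) *\<^sub>R z + \<theta> *\<^sub>R p" by simp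
      have "z \<noteq> p"
      proof
        assume "z = p"
        then have "(1 - v) *\<^sub>R (p - x) = 0" using v by (auto simp: algebra_simps)
        then have "p = x" using vn by auto
        then show False using p(2) by simp
      qed
      then have "x \<in> open_segment z p" using t0 xe by (auto simp: in_segment)
      then show False using x z p(1) unfolding extreme_point_of_def by blast
    qed
    have wpos: "w > 0" using w1 by simp
    have "z = (1 - v / w) *\<^sub>R x + (v / w) *\<^sub>R y"
    proof -
      have "(v / w) *\<^sub>R (y - x) = v *\<^sub>R (p - x)" using w wpos by simp
      then have "z = x + (v / w) *\<^sub>R (y - x)" using v by simp
      then show ?thesis by (simp add: algebra_simps)
    qed
    then show "z \<in> closed_segment x y" using v0 vw wpos
      by (auto simp: in_segment intro!: exI[of _ "v / w"])
  qed
qed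

lemma improving_edge:
  fixes G :: "(real^'n) set"
  assumes "polytope G" "x extreme_point_of G" "p \<in> G" "\<phi> \<bullet> x < \<phi> \<bullet> p"
  shows "\<exists>y. convex hull {x,y} face_of G \<and> x \<noteq> y \<and> \<phi> \<bullet> x < \<phi> \<bullet> y"
  using assms
proof (induction "nat (aff_dim G + 1)" arbitrary: G p rule: less_induct)
  case less
  have conv: "convex G" and comp: "compact G"
    using less.prems polytope_imp_convex polytope_imp_compact by auto
  have xG: "x \<in> G" using less.prems(2) extreme_point_of_def by blast
  show ?case
  proof (cases "G \<subseteq> affine hull {x,p}")
    case True
    obtain y where y: "y extreme_point_of G" "\<And>z. z\<in>G \<Longrightarrow> \<phi> \<bullet> z \<le> \<phi> \<bullet> y"
      using extreme_max_exists[OF comp conv] xG by blast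
    have yG: "y \<in> G" using y(1) extreme_point_of_def by blast
    have "G = closed_segment x y" using seg_lemma[OF conv less.prems(2,3,4) True yG] y(2) by blast
    then have "convex hull {x,y} = G" by (simp add: segment_convex_hull)
    moreover have "\<phi> \<bullet> x < \<phi> \<bullet> y" using y(2)[OF less.prems(3)] less.prems(4) by simp
    ultimately show ?thesis using face_of_refl[OF conv] by auto
  next
    case False
    then obtain z where z: "z \<in> G" "z \<notin> affine hull {x,p}" by blast
    have "polyhedron G" using less.prems(1) polytope_imp_polyhedron by blast
    then obtain F where F: "finite F" "G = \<Inter>F" "\<forall>h\<in>F. \<exists>a b. a \<noteq> 0 \<and> h = {x. a \<bullet> x \<le> b}"
      unfolding polyhedron_def by blast
    then obtain a \<beta> where ab: "\<And>h. h\<in>F \<Longrightarrow> h = {w. a h \<bullet> w \<le> \<beta> h}" by metis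
    have memG: "w \<in> G \<longleftrightarrow> (\<forall>h\<in>F. a h \<bullet> w \<le> \<beta> h)" for w
      using F(2) ab by auto
    have dpos: "\<phi> \<bullet> (p - x) > 0" using less.prems(4) by (simp add: inner_diff_right)
    define lam where "lam = (\<phi> \<bullet> (z - x)) / (\<phi> \<bullet> (p - x))"
    define g where "g = (z - x) - lam *\<^sub>R (p - x)"
    have \<phi>g: "\<phi> \<bullet> g = 0" unfolding g_def lam_def using dpos
      by (simp add: inner_diff_right)
    have g0: "g \<noteq> 0"
    proof
      assume "g = 0"
      then have "z = (1 - lam) *\<^sub>R x + lam *\<^sub>R p" unfolding g_def by (simp add: algebra_simps)
      then have "z \<in> affine hull {x,p}" unfolding affine_hull_2 by force
      then show False using z by blast
    qed
    define T where "T = {h\<in>F. a h \<bullet> x = \<beta> h}"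
    have xin: "\<forall>h\<in>F. a h \<bullet> x \<le> \<beta> h" using xG by (simp add: memG)
    have noline: "\<exists>h\<in>T. a h \<bullet> g > 0 \<or> a h \<bullet> (- g) > 0"
    proof (rule ccontr)
      assume nl: "\<not> ?thesis"
      have nlg: "\<forall>h\<in>F. a h \<bullet> x = \<beta> h \<longrightarrow> a h \<bullet> g \<le> 0"
        using nl unfolding T_def by force
      have nlg': "\<forall>h\<in>F. a h \<bullet> x = \<beta> h \<longrightarrow> a h \<bullet> (-g) \<le> 0"
        using nl unfolding T_def by force
      obtain \<epsilon>1 where e1: "\<epsilon>1 > 0" "\<forall>h\<in>F. a h \<bullet> (x + \<epsilon>1 *\<^sub>R g) \<le> \<beta> h"
        using small_step[OF F(1) xin nlg] by blast
      obtain \<epsilon>2 where e2: "\<epsilon>2 > 0" "\<forall>h\<in>F. a h \<bullet> (x + \<epsilon>2 *\<^sub>R (-g)) \<le> \<beta> h"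
        using small_step[OF F(1) xin nlg'] by blast
      have in1: "x + \<epsilon>1 *\<^sub>R g \<in> G" using e1 by (simp add: memG)
      have in2: "x - \<epsilon>2 *\<^sub>R g \<in> G" using e2 by (simp add: memG)
      define \<theta> where "\<theta> = \<epsilon>1 / (\<epsilon>1 + \<epsilon>2)"
      have th: "\<theta> > 0" "\<theta> < 1" using e1 e2 by (auto simp: \<theta>_def field_simps)
      have "(1 - \<theta>) * \<epsilon>1 - \<theta> * \<epsilon>2 = 0" using e1 e2 by (simp add: \<theta>_def field_simps)
      have "(1 - \<theta>) *\<^sub>R (x + \<epsilon>1 *\<^sub>R g) + \<theta> *\<^sub>R (x - \<epsilon>2 *\<^sub>R g) = x + ((1 - \<theta>) * \<epsilon>1 - \<theta> * \<epsilon>2) *\<^sub>R g"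
        by (simp add: algebra_simps)
      also have "\<dots> = x" using \<open>(1 - \<theta>) * \<epsilon>1 - \<theta> * \<epsilon>2 = 0\<close> by simp
      finally have xe: "x = (1 - \<theta>) *\<^sub>R (x + \<epsilon>1 *\<^sub>R g) + \<theta> *\<^sub>R (x - \<epsilon>2 *\<^sub>R g)" by simp
      have "x + \<epsilon>1 *\<^sub>R g \<noteq> x - \<epsilon>2 *\<^sub>R g"
      proof
        assume "x + \<epsilon>1 *\<^sub>R g = x - \<epsilon>2 *\<^sub>R g"
        then have "(\<epsilon>1 + \<epsilon>2) *\<^sub>R g = 0" by (simp add: algebra_simps)
        then show False using e1 e2 g0 by simp
      qed
      then have "x \<in> open_segment (x + \<epsilon>1 *\<^sub>R g) (x - \<epsilon>2 *\<^sub>R g)"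
        using th xe by (auto simp: in_segment)
      then show False using less.prems(2) in1 in2 unfolding extreme_point_of_def by blast
    qed
    then obtain g' where g': "g' = g \<or> g' = - g" "\<exists>h\<in>T. a h \<bullet> g' > 0" by blast
    have \<phi>g': "\<phi> \<bullet> g' = 0" using g' \<phi>g by auto
    have const: "a h \<bullet> g' = 0" if "\<forall>w\<in>G. a h \<bullet> w = \<beta> h" for h
    proof -
      have "a h \<bullet> g = 0" using that z(1) xG less.prems(3)
        by (simp add: g_def inner_diff_right)
      then show ?thesis using g' by auto
    qed
    define Tp where "Tp = {h\<in>T. a h \<bullet> g' > 0}"
    have Tpf: "finite Tp" "Tp \<noteq> {}" using F(1) g' unfolding Tp_def T_def by auto
    define ratio where "ratio h = - (a h \<bullet> (p - x)) / (a h \<bullet> g')" for h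
    define t where "t = Min (ratio ` Tp)"
    have "t \<in> ratio ` Tp" unfolding t_def using Tpf by (intro Min_in) auto
    then obtain j where j: "j \<in> Tp" "t = ratio j" by blast
    have tle: "t \<le> ratio h" if "h \<in> Tp" for h unfolding t_def using Tpf that by auto
    have pin: "\<forall>h\<in>F. a h \<bullet> p \<le> \<beta> h" using less.prems(3) by (simp add: memG)
    have tpx: "a h \<bullet> (p - x) \<le> 0" if "h \<in> T" for h
      using that pin unfolding T_def by (auto simp: inner_diff_right)
    have t0: "t \<ge> 0" using j tpx[of j] unfolding Tp_def ratio_def
      by (auto simp: divide_nonpos_pos)
    define d where "d = (p - x) + t *\<^sub>R g'"
    have dT: "a h \<bullet> d \<le> 0" if "h \<in> F" "a h \<bullet> x = \<beta> h" for h
    proof (cases "a h \<bullet> g' > 0")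
      case True
      then have "h \<in> Tp" using that unfolding Tp_def T_def by auto
      then have "t \<le> - (a h \<bullet> (p - x)) / (a h \<bullet> g')" using tle ratio_def by auto
      then have "t * (a h \<bullet> g') \<le> - (a h \<bullet> (p - x))" using True by (simp add: field_simps)
      then show ?thesis by (simp add: d_def inner_add_right)
    next
      case False
      have "a h \<bullet> (p - x) \<le> 0" using tpx that unfolding T_def by auto
      moreover have "t * (a h \<bullet> g') \<le> 0" using False t0 by (simp add: mult_nonneg_nonpos)
      ultimately show ?thesis by (simp add: d_def inner_add_right)
    qed
    have jd: "a j \<bullet> d = 0"
    proof -
      have "a j \<bullet> g' > 0" using j unfolding Tp_def by auto
      then show ?thesis unfolding d_def using j(2) by (simp add: ratio_def inner_add_right inner_diff_right)
    qed
    have dT': "\<forall>h\<in>F. a h \<bullet> x = \<beta> h \<longrightarrow> a h \<bullet> d \<le> 0" using dT by blast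
    obtain \<epsilon> where eps: "\<epsilon> > 0" "\<forall>h\<in>F. a h \<bullet> (x + \<epsilon> *\<^sub>R d) \<le> \<beta> h"
      using small_step[OF F(1) xin dT'] by blast
    define q where "q = x + \<epsilon> *\<^sub>R d"
    have qG: "q \<in> G" using eps unfolding q_def by (simp add: memG)
    have jT: "j \<in> F" "a j \<bullet> x = \<beta> j" using j unfolding Tp_def T_def by auto
    have qj: "a j \<bullet> q = \<beta> j" using jd jT unfolding q_def by (simp add: inner_add_right)
    have q\<phi>: "\<phi> \<bullet> x < \<phi> \<bullet> q"
      using eps(1) dpos \<phi>g' unfolding q_def d_def by (simp add: inner_add_right)
    define G' where "G' = G \<inter> {w. a j \<bullet> w = \<beta> j}"
    have jle: "\<forall>w\<in>G. a j \<bullet> w \<le> \<beta> j" using jT(1) by (auto simp: memG)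
    have G'f: "G' face_of G" unfolding G'_def
      by (rule face_of_Int_supporting_hyperplane_le) (use conv jle in auto)
    have "G' \<noteq> G"
    proof
      assume "G' = G"
      then have "\<forall>w\<in>G. a j \<bullet> w = \<beta> j" unfolding G'_def by blast
      then have "a j \<bullet> g' = 0" using const by blast
      then show False using j unfolding Tp_def by auto
    qed
    then have "aff_dim G' < aff_dim G" using face_of_aff_dim_lt[OF conv G'f] by blast
    moreover have "aff_dim G' \<ge> -1" by (rule aff_dim_geq)
    ultimately have lt: "nat (aff_dim G' + 1) < nat (aff_dim G + 1)" by linarith
    have pG': "polytope G'" using face_of_polytope_polytope[OF less.prems(1) G'f] .
    have xG': "x extreme_point_of G'"
      using extreme_point_of_face[OF G'f] less.prems(2) xG jT unfolding G'_def by blast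
    have qG': "q \<in> G'" using qG qj unfolding G'_def by blast
    obtain y where y: "convex hull {x,y} face_of G'" "x \<noteq> y" "\<phi> \<bullet> x < \<phi> \<bullet> y"
      using less.hyps[OF lt pG' xG' qG' q\<phi>] by blast
    then show ?thesis using face_of_trans[OF y(1) G'f] by blast
  qed
qed

lemma ints_lt: "(a::real) \<in> \<int> \<Longrightarrow> b \<in> \<int> \<Longrightarrow> a < b \<Longrightarrow> a + 1 \<le> b"
proof -
  assume "a \<in> \<int>" "b \<in> \<int>" "a < b"
  then obtain i j where "a = of_int i" "b = of_int j" by (auto elim!: Ints_cases)
  with \<open>a < b\<close> show ?thesis by simp
qed

lemma finite_extreme_polytope:
  fixes G :: "(real^'n) set"
  assumes "polytope G" shows "finite {z. z extreme_point_of G}"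
proof -
  obtain V where "finite V" "G = convex hull V" using assms polytope_def by blast
  then show ?thesis using extreme_point_of_convex_hull by (metis finite_subset mem_Collect_eq subsetI)
qed

lemma edge_from_face:
  fixes G P :: "(real^'n) set"
  assumes "convex hull {x,y} face_of G" "G face_of P" "x \<noteq> y"
  shows "poly_edge P x y" "y extreme_point_of G" "y extreme_point_of P" "y \<in> G"
proof -
  have f: "convex hull {x,y} face_of P" using face_of_trans assms by blast
  then show "poly_edge P x y" using assms(3) by (simp add: poly_edge_def aff_dim_convex_hull)
  have "y extreme_point_of convex hull {x,y}" by (simp add: extreme_point_of_convex_hull_2)
  then show "y extreme_point_of G" "y extreme_point_of P" using extreme_point_of_face assms(1) f by blast+
  then show "y \<in> G" using extreme_point_of_def by blast
qed

lemma phase2: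
  fixes G P :: "(real^'n) set" and c r :: "real^'n"
  assumes pG: "polytope G" and GP: "G face_of P"
    and rint: "\<forall>z. z extreme_point_of G \<longrightarrow> r \<bullet> z \<in> \<int>"
  shows "x extreme_point_of G \<Longrightarrow> s \<ge> 0 \<Longrightarrow> \<forall>z\<in>G. (c + s *\<^sub>R r) \<bullet> z \<le> (c + s *\<^sub>R r) \<bullet> x \<Longrightarrow>
    \<exists>xs. mono_path P c xs \<and> hd xs = x \<and> set xs \<subseteq> G \<and> (\<forall>z\<in>G. c \<bullet> z \<le> c \<bullet> last xs)
      \<and> real (length xs - 1) \<le> r \<bullet> x - r \<bullet> last xs"
proof (induction "card {z. z extreme_point_of G \<and> c \<bullet> x < c \<bullet> z}" arbitrary: x s rule: less_induct)
  case less
  have conv: "convex G" and comp: "compact G"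
    using pG polytope_imp_convex polytope_imp_compact by auto
  have xG: "x \<in> G" using less.prems(1) extreme_point_of_def by blast
  have xP: "vertex_of x P" using extreme_point_of_face[OF GP] less.prems(1) xG
    by (simp add: vertex_of_def)
  have finV: "finite {z. z extreme_point_of G}" using finite_extreme_polytope[OF pG] .
  show ?case
  proof (cases "\<forall>z\<in>G. c \<bullet> z \<le> c \<bullet> x")
    case True
    then show ?thesis using xP xG by (intro exI[of _ "[x]"]) auto
  next
    case False
    obtain z1 where z1: "z1 extreme_point_of G" "c \<bullet> x < c \<bullet> z1"
    proof (rule ccontr)
      assume "\<not> thesis"
      then have "\<And>z. z extreme_point_of G \<Longrightarrow> c \<bullet> z \<le> c \<bullet> x" using that by force
      then have "\<forall>z\<in>G. c \<bullet> z \<le> c \<bullet> x" using max_at_extreme[OF comp conv] by blast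
      then show False using False by blast
    qed
    define Tn where "Tn = {z. z extreme_point_of G \<and> r \<bullet> (z - x) < 0}"
    define \<tau> where "\<tau> z = (c \<bullet> (z - x)) / (- (r \<bullet> (z - x)))" for z
    have z1G: "z1 \<in> G" using z1 extreme_point_of_def by blast
    have z1T: "z1 \<in> Tn"
    proof (rule ccontr)
      assume "z1 \<notin> Tn"
      then have "r \<bullet> (z1 - x) \<ge> 0" using z1 unfolding Tn_def by auto
      then have "0 < c \<bullet> (z1 - x) + s * (r \<bullet> (z1 - x))"
        using z1(2) less.prems(2) by (simp add: inner_diff_right add_pos_nonneg)
      moreover have "(c + s *\<^sub>R r) \<bullet> z1 \<le> (c + s *\<^sub>R r) \<bullet> x" using less.prems(3) z1G by blast
      ultimately show False by (simp add: inner_diff_right inner_add_left algebra_simps)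
    qed
    have finT: "finite Tn" using finV unfolding Tn_def by (rule rev_finite_subset) auto
    define s' where "s' = Max (\<tau> ` Tn)"
    have "s' \<in> \<tau> ` Tn" unfolding s'_def using finT z1T by (intro Max_in) auto
    then obtain zs where zs: "zs \<in> Tn" "s' = \<tau> zs" by blast
    have smax: "\<tau> z \<le> s'" if "z \<in> Tn" for z unfolding s'_def using finT that by auto
    have t1: "\<tau> z1 > 0" using z1T z1(2) unfolding Tn_def \<tau>_def
      by (auto simp: inner_diff_right intro!: divide_pos_pos)
    have s'pos: "s' > 0" using smax[OF z1T] t1 by linarith
    have zsG: "zs \<in> G" using zs(1) extreme_point_of_def unfolding Tn_def by blast
    have zsneg: "- (r \<bullet> (zs - x)) > 0" using zs(1) unfolding Tn_def by auto
    have s'le: "s' \<le> s"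
    proof -
      have "(c + s *\<^sub>R r) \<bullet> zs \<le> (c + s *\<^sub>R r) \<bullet> x" using less.prems(3) zsG by blast
      then have "c \<bullet> (zs - x) \<le> s * (- (r \<bullet> (zs - x)))"
        by (simp add: inner_diff_right inner_add_left algebra_simps)
      then have "\<tau> zs \<le> s" unfolding \<tau>_def pos_divide_le_eq[OF zsneg] .
      then show ?thesis using zs(2) by simp
    qed
    have vert: "(c + s' *\<^sub>R r) \<bullet> z \<le> (c + s' *\<^sub>R r) \<bullet> x" if "z extreme_point_of G" for z
    proof (cases "z \<in> Tn")
      case True
      then have "\<tau> z \<le> s'" by (rule smax)
      moreover have zn: "- (r \<bullet> (z - x)) > 0" using True unfolding Tn_def by auto
      ultimately have "c \<bullet> (z - x) \<le> s' * (- (r \<bullet> (z - x)))" unfolding \<tau>_def pos_divide_le_eq[OF zn] by blast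
      then show ?thesis by (simp add: inner_diff_right inner_add_left algebra_simps)
    next
      case False
      then have rz: "r \<bullet> (z - x) \<ge> 0" using that unfolding Tn_def by auto
      have "z \<in> G" using that extreme_point_of_def by blast
      then have "(c + s *\<^sub>R r) \<bullet> z \<le> (c + s *\<^sub>R r) \<bullet> x" using less.prems(3) by blast
      then have "c \<bullet> (z - x) + s * (r \<bullet> (z - x)) \<le> 0"
        by (simp add: inner_diff_right inner_add_left algebra_simps)
      moreover have "s' * (r \<bullet> (z - x)) \<le> s * (r \<bullet> (z - x))" using s'le rz by (rule mult_right_mono)
      ultimately show ?thesis by (simp add: inner_diff_right inner_add_left algebra_simps)
    qed
    have allG: "\<forall>w\<in>G. (c + s' *\<^sub>R r) \<bullet> w \<le> (c + s' *\<^sub>R r) \<bullet> x"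
      using max_at_extreme[OF comp conv, of "c + s' *\<^sub>R r"] vert by blast
    define F' where "F' = G \<inter> {w. (c + s' *\<^sub>R r) \<bullet> w = (c + s' *\<^sub>R r) \<bullet> x}"
    have F'f: "F' face_of G" unfolding F'_def
      by (rule face_of_Int_supporting_hyperplane_le) (use conv allG in auto)
    have pF': "polytope F'" using face_of_polytope_polytope[OF pG F'f] .
    have xF': "x extreme_point_of F'"
      using extreme_point_of_face[OF F'f] less.prems(1) xG unfolding F'_def by blast
    have zsv: "c \<bullet> (zs - x) = s' * (- (r \<bullet> (zs - x)))"
      using zs(2) zsneg unfolding \<tau>_def by (metis less_irrefl nonzero_eq_divide_eq)
    have zsF': "zs \<in> F'" using zsG zsv unfolding F'_def
      by (simp add: inner_diff_right inner_add_left algebra_simps)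
    have "c \<bullet> (zs - x) > 0" using zsv s'pos zsneg by (simp add: mult_pos_neg)
    then have czs: "c \<bullet> x < c \<bullet> zs" by (simp add: inner_diff_right)
    obtain y where y: "convex hull {x,y} face_of F'" "x \<noteq> y" "c \<bullet> x < c \<bullet> y"
      using improving_edge[OF pF' xF' zsF' czs] by blast
    have yF': "y \<in> F'" using edge_from_face(4)[OF y(1) face_of_refl[OF face_of_imp_convex[OF F'f]] y(2)] .
    have yE: "poly_edge P x y" "y extreme_point_of G"
      using edge_from_face[OF face_of_trans[OF y(1) F'f] GP y(2)] by auto
    have "c \<bullet> (y - x) = s' * (- (r \<bullet> (y - x)))"
      using yF' xG unfolding F'_def by (simp add: inner_diff_right inner_add_left algebra_simps)
    moreover have "c \<bullet> (y - x) > 0" using y(3) by (simp add: inner_diff_right)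
    ultimately have "- (r \<bullet> (y - x)) > 0" using s'pos by (simp add: mult_less_0_iff)
    then have "r \<bullet> y < r \<bullet> x" by (simp add: inner_diff_right)
    then have ryx: "r \<bullet> y + 1 \<le> r \<bullet> x" using rint yE(2) less.prems(1) ints_lt by blast
    have ymax: "\<forall>w\<in>G. (c + s' *\<^sub>R r) \<bullet> w \<le> (c + s' *\<^sub>R r) \<bullet> y"
      using allG yF' unfolding F'_def by auto
    have sub: "{z. z extreme_point_of G \<and> c \<bullet> y < c \<bullet> z} \<subset> {z. z extreme_point_of G \<and> c \<bullet> x < c \<bullet> z}"
      using y(3) yE(2) by auto
    have "card {z. z extreme_point_of G \<and> c \<bullet> y < c \<bullet> z} < card {z. z extreme_point_of G \<and> c \<bullet> x < c \<bullet> z}"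
      by (rule psubset_card_mono[OF _ sub]) (use finV in auto)
    then obtain xs' where xs': "mono_path P c xs'" "hd xs' = y" "set xs' \<subseteq> G" "\<forall>z\<in>G. c \<bullet> z \<le> c \<bullet> last xs'"
        "real (length xs' - 1) \<le> r \<bullet> y - r \<bullet> last xs'"
      using less.hyps[OF _ yE(2) less_imp_le[OF s'pos] ymax] by blast
    then obtain ys where ys: "xs' = y # ys" unfolding mono_path_def by (cases xs') auto
    have "mono_path P c (x # xs')" using xs'(1) xP yE(1) y(3) ys by simp
    moreover have "real (length (x # xs') - 1) \<le> r \<bullet> x - r \<bullet> last (x # xs')"
      using xs'(5) ryx ys by simp
    ultimately show ?thesis using xs' xG ys by (intro exI[of _ "x # xs'"]) auto
  qed
qed

lemma inner_real_vec: "(x::real^'n) \<bullet> y = (\<Sum>j\<in>UNIV. x $ j * y $ j)"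
  by (simp add: inner_vec_def)

lemma memP_iff:
  fixes A :: "real^'n^'m"
  assumes "P = {x. \<forall>i. (A *v x) $ i \<le> b $ i}"
  shows "w \<in> P \<longleftrightarrow> (\<forall>i. A $ i \<bullet> w \<le> b $ i)"
  using assms by (simp add: matrix_vector_mul_component)

lemma P_polytope:
  fixes A :: "real^'n^'m"
  assumes P_def: "P = {x. \<forall>i. (A *v x) $ i \<le> b $ i}"
    and cube: "P \<subseteq> {x. \<forall>j. 0 \<le> x $ j \<and> x $ j \<le> real k}"
  shows "polytope P"
proof -
  have "P = \<Inter> (range (\<lambda>i. {x. A $ i \<bullet> x \<le> b $ i}))"
    using memP_iff[OF P_def] by auto
  then have "polyhedron P" by (auto intro!: polyhedron_Inter polyhedron_halfspace_le)
  moreover have "P \<subseteq> cbox 0 (\<chi> j. real k)" using cube by (auto simp: mem_box_cart)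
  then have "bounded P" using bounded_cbox bounded_subset by blast
  ultimately show ?thesis by (simp add: polytope_eq_bounded_polyhedron)
qed

lemma norm_ge:
  fixes A :: "real^'n^'m"
  shows "\<bar>A $ i $ j\<bar> \<le> max_entry_norm A"
proof -
  have "{\<bar>A $ i $ j\<bar> | i j. True} = (\<lambda>(i,j). \<bar>A $ i $ j\<bar>) ` UNIV" by auto
  then have "finite {\<bar>A $ i $ j\<bar> | i j. True}" by simp
  then show ?thesis unfolding max_entry_norm_def by (intro Max_ge) auto
qed

lemma norm_nonneg': "0 \<le> max_entry_norm (A::real^'n^'m)"
  using norm_ge[of A] abs_ge_zero order_trans by blast

lemma range_bound:
  fixes A :: "real^'n^'m"
  assumes cube: "P \<subseteq> {x. \<forall>j. 0 \<le> x $ j \<and> x $ j \<le> real k}" and "z \<in> P" "w \<in> P"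
  shows "A $ i \<bullet> z - A $ i \<bullet> w \<le> max_entry_norm A * real CARD('n) * real k"
proof -
  have "A $ i \<bullet> z - A $ i \<bullet> w = (\<Sum>j\<in>UNIV. A $ i $ j * (z $ j - w $ j))"
    by (simp add: inner_real_vec sum_subtractf algebra_simps)
  also have "\<dots> \<le> (\<Sum>j\<in>(UNIV::'n set). max_entry_norm A * real k)"
  proof (rule sum_mono)
    fix j
    have "0 \<le> z $ j \<and> z $ j \<le> real k" "0 \<le> w $ j \<and> w $ j \<le> real k"
      using cube assms(2,3) by blast+
    then have "\<bar>z $ j - w $ j\<bar> \<le> real k" by linarith
    have "A $ i $ j * (z $ j - w $ j) \<le> \<bar>A $ i $ j\<bar> * \<bar>z $ j - w $ j\<bar>"
      by (metis abs_ge_self abs_mult)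
    also have "\<dots> \<le> max_entry_norm A * real k"
      by (rule mult_mono) (use norm_ge[of A i j] \<open>\<bar>z $ j - w $ j\<bar> \<le> real k\<close> norm_nonneg'[of A] in auto)
    finally show "A $ i $ j * (z $ j - w $ j) \<le> max_entry_norm A * real k" .
  qed
  also have "\<dots> = max_entry_norm A * real CARD('n) * real k" by simp
  finally show ?thesis .
qed

lemma int_row:
  fixes A :: "real^'n^'m"
  assumes "\<forall>i j. A $ i $ j \<in> \<int>" "\<forall>j. v $ j \<in> \<int>"
  shows "A $ i \<bullet> v \<in> \<int>"
  unfolding inner_real_vec using assms by (intro Ints_sum Ints_mult) auto

lemma main_claim:
  fixes A :: "real^'n^'m" and b :: "real^'m" and P :: "(real^'n) set" and k :: nat and c :: "real^'n"
  assumes A_int: "\<forall>i j. A $ i $ j \<in> \<int>"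
    and P_def: "P = {x. \<forall>i. (A *v x) $ i \<le> b $ i}"
    and cube: "P \<subseteq> {x. \<forall>j. 0 \<le> x $ j \<and> x $ j \<le> real k}"
    and lattice: "\<forall>v. vertex_of v P \<longrightarrow> (\<forall>j. v $ j \<in> \<int>)"
  shows "G face_of P \<Longrightarrow> aff_dim G = int e \<Longrightarrow> u extreme_point_of G \<Longrightarrow>
    \<exists>xs. mono_path P c xs \<and> hd xs = u \<and> set xs \<subseteq> G \<and> (\<forall>z\<in>G. c \<bullet> z \<le> c \<bullet> last xs) \<and>
      real (length xs - 1) \<le> (if e = 0 then 0 else real (e - 1) * (max_entry_norm A * real CARD('n) * real k) + 1)"
proof (induction e arbitrary: G u rule: less_induct)
  case (less e)
  define M where "M = max_entry_norm A * real CARD('n) * real k"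
  have M0: "M \<ge> 0" unfolding M_def using norm_nonneg'[of A] by simp
  have pP: "polytope P" using P_polytope[OF P_def cube] .
  have GP: "G face_of P" using less.prems(1) .
  have pG: "polytope G" using face_of_polytope_polytope[OF pP GP] .
  have conv: "convex G" and comp: "compact G"
    using pG polytope_imp_convex polytope_imp_compact by auto
  have uG: "u \<in> G" using less.prems(3) extreme_point_of_def by blast
  have uP: "u extreme_point_of P" using extreme_point_of_face[OF GP] less.prems(3) uG by blast
  have memP: "\<And>w. w \<in> P \<longleftrightarrow> (\<forall>i. A $ i \<bullet> w \<le> b $ i)" using memP_iff[OF P_def] .
  have GsubP: "G \<subseteq> P" using face_of_imp_subset[OF GP] .
  have bnd0: "0 \<le> (if e = 0 then 0 else real (e - 1) * M + 1)" using M0 by auto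
  have Meq: "max_entry_norm A * real CARD('n) * real k = M" unfolding M_def ..
  have main: "\<exists>xs. mono_path P c xs \<and> hd xs = u \<and> set xs \<subseteq> G \<and> (\<forall>z\<in>G. c \<bullet> z \<le> c \<bullet> last xs) \<and>
      real (length xs - 1) \<le> (if e = 0 then 0 else real (e - 1) * M + 1)"
  proof (cases "\<forall>z\<in>G. c \<bullet> z \<le> c \<bullet> u")
    case True
    then show ?thesis using uP uG bnd0 by (intro exI[of _ "[u]"]) (auto simp: vertex_of_def)
  next
    case False
    then obtain z0 where z0: "z0 \<in> G" "c \<bullet> u < c \<bullet> z0" by force
    have "e \<noteq> 0"
    proof
      assume "e = 0"
      then obtain a where "G = {a}" using less.prems(2) aff_dim_eq_0 by auto
      then show False using z0 uG by auto
    qed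
    obtain y where y: "y extreme_point_of G" "\<And>z. z \<in> G \<Longrightarrow> c \<bullet> z \<le> c \<bullet> y"
      using extreme_max_exists[OF comp conv] uG by blast
    have yG: "y \<in> G" using y(1) extreme_point_of_def by blast
    have cuy: "c \<bullet> u < c \<bullet> y" using y(2)[OF z0(1)] z0(2) by simp
    show ?thesis
    proof (cases "e = 1")
      case True
      have "affine hull {u,y} = affine hull G"
      proof (rule affine_dim_equal)
        show "affine hull {u, y} \<subseteq> affine hull G" using uG yG by (simp add: hull_mono)
        show "aff_dim (affine hull {u, y}) = aff_dim (affine hull G)"
          using True less.prems(2) cuy by auto
      qed auto
      then have line: "G \<subseteq> affine hull {u,y}" by (simp add: hull_subset)
      have "G = closed_segment u y"
        using seg_lemma[OF conv less.prems(3) yG cuy line yG] y(2) by blast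
      then have Geq: "G = convex hull {u,y}" by (simp add: segment_convex_hull)
      have "u \<noteq> y" using cuy by auto
      then have "poly_edge P u y" using GP Geq by (simp add: poly_edge_def aff_dim_convex_hull)
      moreover have "vertex_of y P" using extreme_point_of_face[OF GP] y(1) yG by (simp add: vertex_of_def)
      ultimately have "mono_path P c [u, y]" using uP cuy by (simp add: vertex_of_def)
      then show ?thesis using True uG yG y(2) by (intro exI[of _ "[u,y]"]) auto
    next
      case False
      with \<open>e \<noteq> 0\<close> have e2: "e \<ge> 2" by auto
      obtain y' where y': "y' \<in> G" "y' \<noteq> u" using z0 by blast
      obtain i where i: "A $ i \<bullet> u = b $ i" "\<exists>z\<in>G. A $ i \<bullet> z < b $ i"
      proof (rule ccontr)
        assume "\<not> thesis"
        then have nt: "\<forall>i. A $ i \<bullet> u = b $ i \<longrightarrow> (\<forall>z\<in>G. \<not> A $ i \<bullet> z < b $ i)" using that by blast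
        have uin: "\<forall>i\<in>UNIV. A $ i \<bullet> u \<le> b $ i" using memP uP extreme_point_of_def by blast
        have dd: "\<forall>i\<in>UNIV. A $ i \<bullet> u = b $ i \<longrightarrow> A $ i \<bullet> (u - y') \<le> 0"
        proof (intro ballI impI)
          fix i assume "A $ i \<bullet> u = b $ i"
          moreover have "A $ i \<bullet> y' \<le> b $ i" using memP GsubP y'(1) by blast
          ultimately show "A $ i \<bullet> (u - y') \<le> 0" using nt y'(1) by (force simp: inner_diff_right)
        qed
        obtain \<epsilon> where eps: "\<epsilon> > 0" "\<forall>i\<in>UNIV. A $ i \<bullet> (u + \<epsilon> *\<^sub>R (u - y')) \<le> b $ i"
          using small_step[of UNIV "\<lambda>i. A $ i" u "\<lambda>i. b $ i" "u - y'", OF finite_class.finite_UNIV uin dd] by blast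
        define q where "q = u + \<epsilon> *\<^sub>R (u - y')"
        have qP: "q \<in> P" using eps memP unfolding q_def by blast
        define \<theta> where "\<theta> = \<epsilon> / (1 + \<epsilon>)"
        have th: "\<theta> > 0" "\<theta> < 1" using eps by (auto simp: \<theta>_def field_simps)
        have "(1 - \<theta>) * \<epsilon> - \<theta> = 0" "1 - \<theta> + \<theta> = 1" using eps by (auto simp: \<theta>_def field_simps)
        have "(1 - \<theta>) *\<^sub>R q + \<theta> *\<^sub>R y' = u + ((1 - \<theta>) * \<epsilon> - \<theta>) *\<^sub>R (u - y')"
          unfolding q_def by (simp add: algebra_simps)
        then have ue: "u = (1 - \<theta>) *\<^sub>R q + \<theta> *\<^sub>R y'" using \<open>(1 - \<theta>) * \<epsilon> - \<theta> = 0\<close> by simp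
        have "q \<noteq> y'"
        proof
          assume "q = y'"
          then have "(1 + \<epsilon>) *\<^sub>R (u - y') = 0" unfolding q_def by (simp add: algebra_simps)
          then show False using eps y'(2) by auto
        qed
        then have "u \<in> open_segment q y'" using th ue by (auto simp: in_segment)
        moreover have "y' \<in> P" using y'(1) GsubP by blast
        ultimately show False using uP qP unfolding extreme_point_of_def by blast
      qed
      define r where "r = A $ i"
      define \<beta> where "\<beta> = b $ i"
      define Fu where "Fu = G \<inter> {w. r \<bullet> w = \<beta>}"
      have rle: "\<forall>w\<in>G. r \<bullet> w \<le> \<beta>" using GsubP memP unfolding r_def \<beta>_def by blast
      have FuG: "Fu face_of G" unfolding Fu_def
        by (rule face_of_Int_supporting_hyperplane_le) (use conv rle in auto)
      have FuP: "Fu face_of P" using face_of_trans[OF FuG GP] .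
      have "Fu \<noteq> G" using i unfolding Fu_def r_def \<beta>_def by (metis (mono_tags, lifting) Int_iff less_irrefl mem_Collect_eq)
      then have ltG: "aff_dim Fu < aff_dim G" using face_of_aff_dim_lt[OF conv FuG] by blast
      have uFu: "u \<in> Fu" using uG i unfolding Fu_def r_def \<beta>_def by auto
      then have "Fu \<noteq> {}" by auto
      then have "aff_dim Fu \<noteq> -1" using aff_dim_empty by blast
      then have afp: "aff_dim Fu \<ge> 0" using aff_dim_geq[of Fu] by linarith
      define e1 where "e1 = nat (aff_dim Fu)"
      have e1e: "e1 < e" "aff_dim Fu = int e1" using ltG less.prems(2) afp unfolding e1_def by auto
      have uxF: "u extreme_point_of Fu" using extreme_point_of_face[OF FuG] less.prems(3) uFu by blast
      obtain xs1 where xs1: "mono_path P c xs1" "hd xs1 = u" "set xs1 \<subseteq> Fu" "\<forall>z\<in>Fu. c \<bullet> z \<le> c \<bullet> last xs1"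
        "real (length xs1 - 1) \<le> (if e1 = 0 then 0 else real (e1 - 1) * M + 1)"
        using less.IH[OF e1e(1) FuP e1e(2) uxF] unfolding M_def by blast
      define w where "w = last xs1"
      have xs1ne: "xs1 \<noteq> []" using xs1(1) mono_path_def by blast
      have wFu: "w \<in> Fu" using xs1(3) xs1ne unfolding w_def by auto
      have wP: "w extreme_point_of P" using xs1(1) xs1ne unfolding w_def mono_path_def vertex_of_def by auto
      have wG: "w extreme_point_of G" using extreme_point_of_face[OF GP] wP wFu unfolding Fu_def by blast
      have rw: "r \<bullet> w = \<beta>" using wFu unfolding Fu_def by auto
      define V where "V = {z. z extreme_point_of G \<and> r \<bullet> z < \<beta>}"
      have finV: "finite V" using finite_extreme_polytope[OF pG] unfolding V_def by (rule rev_finite_subset) auto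
      define s0 where "s0 = (\<Sum>z\<in>V. \<bar>c \<bullet> (z - w)\<bar> / (\<beta> - r \<bullet> z))"
      have s00: "s0 \<ge> 0" unfolding s0_def V_def by (intro sum_nonneg) auto
      have vert: "(c + s0 *\<^sub>R r) \<bullet> z \<le> (c + s0 *\<^sub>R r) \<bullet> w" if "z extreme_point_of G" for z
      proof -
        have zG: "z \<in> G" using that extreme_point_of_def by blast
        show ?thesis
        proof (cases "r \<bullet> z < \<beta>")
          case True
          then have zV: "z \<in> V" using that unfolding V_def by auto
          have pos: "\<beta> - r \<bullet> z > 0" using True by simp
          have "\<bar>c \<bullet> (z - w)\<bar> / (\<beta> - r \<bullet> z) \<le> s0"
            unfolding s0_def using finV zV by (intro member_le_sum) (auto simp: V_def)
          then have "\<bar>c \<bullet> (z - w)\<bar> \<le> s0 * (\<beta> - r \<bullet> z)" using pos by (simp add: pos_divide_le_eq)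
          then have "c \<bullet> (z - w) \<le> s0 * (\<beta> - r \<bullet> z)" by linarith
          then show ?thesis using rw by (simp add: inner_diff_right inner_add_left algebra_simps)
        next
          case False
          then have "r \<bullet> z = \<beta>" using rle zG by force
          then have "z \<in> Fu" using zG unfolding Fu_def by auto
          then have "c \<bullet> z \<le> c \<bullet> w" using xs1(4) unfolding w_def by blast
          then show ?thesis using rw \<open>r \<bullet> z = \<beta>\<close> by (simp add: inner_add_left)
        qed
      qed
      have wmax: "\<forall>z\<in>G. (c + s0 *\<^sub>R r) \<bullet> z \<le> (c + s0 *\<^sub>R r) \<bullet> w"
        using max_at_extreme[OF comp conv, of "c + s0 *\<^sub>R r"] vert by blast
      have rint: "\<forall>z. z extreme_point_of G \<longrightarrow> r \<bullet> z \<in> \<int>"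
      proof (intro allI impI)
        fix z assume "z extreme_point_of G"
        then have "z extreme_point_of P" using extreme_point_of_face[OF GP] extreme_point_of_def by blast
        then have "\<forall>j. z $ j \<in> \<int>" using lattice vertex_of_def by blast
        then show "r \<bullet> z \<in> \<int>" unfolding r_def using int_row A_int by blast
      qed
      obtain xs2 where xs2: "mono_path P c xs2" "hd xs2 = w" "set xs2 \<subseteq> G" "\<forall>z\<in>G. c \<bullet> z \<le> c \<bullet> last xs2"
        "real (length xs2 - 1) \<le> r \<bullet> w - r \<bullet> last xs2"
        using phase2[OF pG GP rint wG s00 wmax] by blast
      have xs2ne: "xs2 \<noteq> []" using xs2(1) mono_path_def by blast
      have "last xs2 \<in> G" using xs2(3) xs2ne by auto
      then have "r \<bullet> w - r \<bullet> last xs2 \<le> M"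
        unfolding M_def r_def using range_bound[OF cube] GsubP wFu unfolding Fu_def by blast
      then have l2: "real (length xs2 - 1) \<le> M" using xs2(5) by linarith
      have app: "mono_path P c (xs1 @ tl xs2)" "hd (xs1 @ tl xs2) = hd xs1" "last (xs1 @ tl xs2) = last xs2"
        "length (xs1 @ tl xs2) = length xs1 + length xs2 - 1"
        using mono_path_append[OF xs1(1) xs2(1)] xs2(2) unfolding w_def by auto
      have "set (tl xs2) \<subseteq> set xs2" by (cases xs2) auto
      then have setG: "set (xs1 @ tl xs2) \<subseteq> G" using xs1(3) xs2(3) FuG face_of_imp_subset by fastforce
      have len1: "length xs1 \<ge> 1" "length xs2 \<ge> 1" using xs1ne xs2ne by (auto simp: Suc_le_eq)
      have "real (length (xs1 @ tl xs2) - 1) = real (length xs1 - 1) + real (length xs2 - 1)"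
        using app(4) len1 by (simp add: of_nat_diff)
      also have "\<dots> \<le> (if e1 = 0 then 0 else real (e1 - 1) * M + 1) + M" using xs1(5) l2 by linarith
      also have "\<dots> \<le> real (e - 1) * M + 1"
      proof (cases "e1 = 0")
        case True
        have "1 * M \<le> real (e - 1) * M" using e2 M0 by (intro mult_right_mono) auto
        then show ?thesis using True by simp
      next
        case False
        have "real (e1 - 1) + 1 \<le> real (e - 1)" using False e1e(1) by (simp add: of_nat_diff)
        then have "(real (e1 - 1) + 1) * M \<le> real (e - 1) * M" using M0 by (intro mult_right_mono) auto
        then show ?thesis using False by (simp add: algebra_simps)
      qed
      finally have "real (length (xs1 @ tl xs2) - 1) \<le> (if e = 0 then 0 else real (e - 1) * M + 1)"
        using \<open>e \<noteq> 0\<close> by simp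
      then show ?thesis using app setG xs2(4) xs1(2) by (intro exI[of _ "xs1 @ tl xs2"]) auto
    qed
  qed
  then show ?case unfolding M_def .
qed

theorem mainTheorem4:
  fixes A :: "real^'n^'m" and b :: "real^'m" and P :: "(real^'n) set" and k d :: nat
  assumes A_int: "\<forall>i j. A $ i $ j \<in> \<int>"
    and P_def: "P = {x. \<forall>i. (A *v x) $ i \<le> b $ i}"
    and cube: "P \<subseteq> {x. \<forall>j. 0 \<le> x $ j \<and> x $ j \<le> real k}"
    and lattice: "\<forall>v. vertex_of v P \<longrightarrow> (\<forall>j. v $ j \<in> \<int>)"
    and dim: "aff_dim P = int d"
  shows "real (monotone_diameter P) \<le> real (d - 1) * max_entry_norm A * real CARD('n) * real k + 1"
proof -
  define M where "M = max_entry_norm A * real CARD('n) * real k"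
  have M0: "M \<ge> 0" unfolding M_def using norm_nonneg'[of A] by simp
  define B where "B = real (d - 1) * M + 1"
  have B0: "B \<ge> 0" unfolding B_def using M0 by simp
  have Beq: "real (d - 1) * max_entry_norm A * real CARD('n) * real k + 1 = B"
    by (simp add: B_def M_def mult.assoc)
  have pP: "polytope P" using P_polytope[OF P_def cube] .
  have PP: "P face_of P" using face_of_refl polytope_imp_convex[OF pP] by blast
  have each: "real (shortest_mono_len P c v) \<le> B" if v: "vertex_of v P" for c v
  proof -
    have v': "v extreme_point_of P" using v by (simp add: vertex_of_def)
    obtain xs where xs: "mono_path P c xs" "hd xs = v" "set xs \<subseteq> P" "\<forall>z\<in>P. c \<bullet> z \<le> c \<bullet> last xs"
      "real (length xs - 1) \<le> (if d = 0 then 0 else real (d - 1) * M + 1)"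
      using main_claim[OF A_int P_def cube lattice PP dim v', where c = c] unfolding M_def by blast
    have "xs \<noteq> []" using xs(1) mono_path_def by blast
    then have lv: "vertex_of (last xs) P" using xs(1) unfolding mono_path_def by auto
    have "shortest_mono_len P c v \<le> length xs - 1"
      unfolding shortest_mono_len_def by (rule Least_le) (use xs lv in blast)
    then have "real (shortest_mono_len P c v) \<le> real (length xs - 1)" by simp
    also have "\<dots> \<le> B" using xs(5) M0 unfolding B_def by (auto split: if_splits)
    finally show ?thesis .
  qed
  define S where "S = {shortest_mono_len P c v | c v. generic_obj P c \<and> vertex_of v P}"
  define K where "K = nat \<lfloor>B\<rfloor>"
  have SK: "l \<le> K" if lS: "l \<in> S" for l
  proof -
    obtain c v where "l = shortest_mono_len P c v" "vertex_of v P" using lS unfolding S_def by blast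
    then have "real l \<le> B" using each by blast
    then have "int l \<le> \<lfloor>B\<rfloor>" by (simp add: le_floor_iff)
    then show ?thesis unfolding K_def by linarith
  qed
  have "Sup S \<le> K"
  proof (cases "S = {}")
    case True then show ?thesis by simp
  next
    case False then show ?thesis using SK by (intro cSup_least) auto
  qed
  then have "real (Sup S) \<le> real K" by simp
  also have "real K \<le> B" unfolding K_def using B0 by simp
  finally show ?thesis unfolding monotone_diameter_def S_def[symmetric] Beq .
qed

end
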